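(* Let $x\in\mathbb{R}^N$, $\eta_x>0$, and let $\phi:\mathbb{R}^N\to\mathbb{R}$ satisfy hypothesis (H) at $x$ with radius $\eta_x$, with $p_x\neq0$. Then for every $\epsilon\in(0,\eta_x)$: $$\Big|\mathcal{L}_s^\epsilon[\phi](x)-\int_\epsilon^\infty L_\phi\Big(x,t\frac{p_x}{|p_x|},t\frac{p_x}{|p_x|}\Big)\mathrm{d}\mu_s(t)\Big|\le 4c_s s\,C_x\big(\eta_x^{2-2s}-\epsilon^{2-2s}\big)A_\epsilon+c_s(1-s)\Big(\eta_x^{-2s}+\frac{2s}{2s-1}\eta_x^{1-2s}\Big)\omega_\phi(A_\epsilon).$$
   Context: Fix $N\ge1$ and $s\in(\frac12,1)$. Let $C_s=\frac{4^s s\,\Gamma(\frac12+s)}{\pi^{1/2}\Gamma(1-s)}$ and $c_s=\frac{C_s}{s(1-s)}$. Let $\mu_s$ be the Borel measure on $(0,\infty)$ with $\mathrm{d}\mu_s(t)=C_s t^{-1-2s}\,\mathrm{d}t$. For $\phi:\mathbb{R}^N\to\mathbb{R}$ and $x,y,\tilde y\in\mathbb{R}^N$ let $L_\phi(x,y,\tilde y)=\phi(x+y)+\phi(x-\tilde y)-2\phi(x)$. For $\epsilon>0$ define $\mathcal{L}_s^\epsilon[\phi](x)=\sup_{|y|=1}\inf_{|\tilde y|=1}\int_\epsilon^\infty L_\phi(x,ty,t\tilde y)\,\mathrm{d}\mu_s(t)$. Hypothesis (H) at $x$ with radius $\eta_x>0$: $\phi:\mathbb{R}^N\to\mathbb{R}$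 is bounded and Borel; (i) $\phi\in C^2(\bar B_{\eta_x}(x))$, and we set $p_x=\nabla\phi(x)$, $C_x=\frac12\|\nabla^2\phi\|_{L^\infty(B_{\eta_x}(x))}$; (ii) $\phi$ is bounded and uniformly continuous on $\mathbb{R}^N\setminus\bar B_{\eta_x}(x)$, with modulus $\omega_\phi(a)=\sup\{|\phi(z)-\phi(w)|: z,w\in\mathbb{R}^N\setminus\bar B_{\eta_x}(x),\ |z-w|\le a\}$. When $p_x\ne0$ and $0<\epsilon<\eta_x$ define $$\kappa_\epsilon=\sup\Big\{a\in[0,2]:\ a^2\le\frac{8\omega_\phi(a)}{|p_x|}\cdot\frac{\frac{2s-1}{2s}\eta_x^{-2s}+\eta_x^{1-2s}}{\epsilon^{1-2s}-\eta_x^{1-2s}}\Big\},\quad A_\epsilon=\max\Big\{\frac{16C_x}{|p_x|}\cdot\frac{2s-1}{1-s}\cdot\frac{\eta_x^{2-2s}-\epsilon^{2-2s}}{\epsilon^{1-2s}-\eta_x^{1-2s}},\ \kappa_\epsilon\Big\}.$$ *)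

theory Defs
  imports "HOL-Analysis.Analysis"
begin

definition Cs :: "real \<Rightarrow> real" where
  "Cs s = 4 powr s * s * Gamma (1/2 + s) / (sqrt pi * Gamma (1 - s))"

definition cs :: "real \<Rightarrow> real" where
  "cs s = Cs s / (s * (1 - s))"

definition muS :: "real \<Rightarrow> real measure" where
  "muS s = density lborel (\<lambda>t. ennreal (indicator {(0::real)<..} t * Cs s * t powr (-1 - 2 * s)))"

definition Lphi :: "('a::euclidean_space \<Rightarrow> real) \<Rightarrow> 'a \<Rightarrow> 'a \<Rightarrow> 'a \<Rightarrow> real" where
  "Lphi \<phi> x y y' = \<phi> (x + y) + \<phi> (x - y') - 2 * \<phi> x"

definition Leps :: "real \<Rightarrow> real \<Rightarrow> ('a::euclidean_space \<Rightarrow> real) \<Rightarrow> 'a \<Rightarrow> real" where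
  "Leps s \<epsilon> \<phi> x = (SUP y\<in>sphere 0 1. INF y'\<in>sphere 0 1.
      (LINT t:{\<epsilon><..}|muS s. Lphi \<phi> x (t *\<^sub>R y) (t *\<^sub>R y')))"

definition omega :: "('a::euclidean_space \<Rightarrow> real) \<Rightarrow> 'a \<Rightarrow> real \<Rightarrow> real \<Rightarrow> real" where
  "omega \<phi> x \<eta> a = (SUP zw\<in>{(z, w). z \<in> - cball x \<eta> \<and> w \<in> - cball x \<eta> \<and> dist z w \<le> a}.
      \<bar>\<phi> (fst zw) - \<phi> (snd zw)\<bar>)"

text \<open>kappa_eps, with p = |p_x|.\<close>
definition kappa :: "real \<Rightarrow> ('a::euclidean_space \<Rightarrow> real) \<Rightarrow> 'a \<Rightarrow> real \<Rightarrow> real \<Rightarrow> real \<Rightarrow> real" where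
  "kappa s \<phi> x \<eta> p \<epsilon> = Sup {a \<in> {0..2}. a\<^sup>2 \<le> 8 * omega \<phi> x \<eta> a / p *
      (((2 * s - 1) / (2 * s) * \<eta> powr (-2 * s) + \<eta> powr (1 - 2 * s)) / (\<epsilon> powr (1 - 2 * s) - \<eta> powr (1 - 2 * s)))}"

text \<open>A_eps, with p = |p_x| and C = C_x.\<close>
definition Aeps :: "real \<Rightarrow> ('a::euclidean_space \<Rightarrow> real) \<Rightarrow> 'a \<Rightarrow> real \<Rightarrow> real \<Rightarrow> real \<Rightarrow> real \<Rightarrow> real" where
  "Aeps s \<phi> x \<eta> p C \<epsilon> = max (16 * C / p * (2 * s - 1) / (1 - s) *
      (\<eta> powr (2 - 2 * s) - \<epsilon> powr (2 - 2 * s)) / (\<epsilon> powr (1 - 2 * s) - \<eta> powr (1 - 2 * s)))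
     (kappa s \<phi> x \<eta> p \<epsilon>)"

end

theory Submission
  imports Defs
begin


lemma sin_ge_half:
  fixes y :: real assumes "0 \<le> y" "y \<le> pi/2"
  shows "y / 2 \<le> sin y"
proof (cases "y \<le> pi/3")
  case True
  have "(\<lambda>y. sin y - y/2) 0 \<le> (\<lambda>y. sin y - y/2) y"
  proof (rule DERIV_nonneg_imp_nondecreasing[OF assms(1)])
    fix z assume z: "0 \<le> z" "z \<le> y"
    have "cos (pi/3) \<le> cos z"
      using z True by (intro cos_monotone_0_pi_le) auto
    then show "\<exists>d. ((\<lambda>y. sin y - y/2) has_real_derivative d) (at z) \<and> 0 \<le> d"
      by (intro exI[of _ "cos z - 1/2"]) (auto intro!: derivative_eq_intros simp: cos_60)
  qed
  then show ?thesis by simp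
next
  case False
  have "sin (pi/3) \<le> sin y"
    using False assms by (intro sin_monotone_2pi_le) auto
  moreover have "y/2 \<le> sqrt 3 / 2"
  proof -
    have "pi \<le> 3.1415926535899" by (rule pi_approx(2))
    moreover have "(1.7::real) \<le> sqrt 3" by (rule real_le_rsqrt) (simp add: power2_eq_square)
    ultimately show ?thesis using assms by simp
  qed
  ultimately show ?thesis by (simp add: sin_60)
qed

lemma hbound:
  fixes H :: "'a::euclidean_space \<Rightarrow> ('a \<Rightarrow>\<^sub>L 'a)"
  assumes "continuous_on (cball x \<eta>) H" "\<eta> > 0" "z \<in> cball x \<eta>"
  shows "norm (H z) \<le> (SUP z\<in>ball x \<eta>. norm (H z))"
proof -
  have cont: "continuous_on (cball x \<eta>) (\<lambda>z. norm (H z))"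
    using assms(1) by (intro continuous_intros)
  have "bounded ((\<lambda>z. norm (H z)) ` cball x \<eta>)"
    by (intro compact_imp_bounded compact_continuous_image cont) simp
  then have bdd: "bdd_above ((\<lambda>z. norm (H z)) ` ball x \<eta>)"
    by (meson bounded_imp_bdd_above bdd_above_mono ball_subset_cball image_mono)
  let ?B = "(SUP z\<in>ball x \<eta>. norm (H z))"
  have "(\<lambda>z. norm (H z)) ` closure (ball x \<eta>) \<subseteq> {..?B}"
  proof (rule image_closure_subset)
    show "continuous_on (closure (ball x \<eta>)) (\<lambda>z. norm (H z))" using cont assms(2) by simp
    show "closed {..?B}" by simp
    show "(\<lambda>z. norm (H z)) ` ball x \<eta> \<subseteq> {..?B}" using bdd by (auto intro: cSUP_upper)
  qed
  then show ?thesis using assms(2,3) by (auto simp: image_subset_iff)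
qed

lemma taylor_bound:
  fixes \<phi> :: "'a::euclidean_space \<Rightarrow> real" and D :: "'a \<Rightarrow> 'a" and H :: "'a \<Rightarrow> ('a \<Rightarrow>\<^sub>L 'a)"
  assumes eta: "\<eta> > 0"
    and grad: "\<And>z. z \<in> cball x \<eta> \<Longrightarrow> (\<phi> has_derivative (\<lambda>h. D z \<bullet> h)) (at z within cball x \<eta>)"
    and hess: "\<And>z. z \<in> cball x \<eta> \<Longrightarrow> (D has_derivative blinfun_apply (H z)) (at z within cball x \<eta>)"
    and hess_cont: "continuous_on (cball x \<eta>) H"
    and t: "0 \<le> t" "t \<le> \<eta>" and v: "norm v \<le> t" and v': "norm v' \<le> t"
  shows "\<bar>\<phi> (x + v) - \<phi> (x + v') - D x \<bullet> (v - v')\<bar> \<le> norm (v - v') * ((SUP z\<in>ball x \<eta>. norm (H z)) * t)"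
proof -
  let ?B = "(SUP z\<in>ball x \<eta>. norm (H z))"
  have lipD: "norm (D z - D x) \<le> ?B * norm (z - x)" if z: "z \<in> cball x \<eta>" for z
  proof (rule differentiable_bound[OF convex_cball])
    show "\<And>w. w \<in> cball x \<eta> \<Longrightarrow> (D has_derivative blinfun_apply (H w)) (at w within cball x \<eta>)"
      by (rule hess)
    show "\<And>w. w \<in> cball x \<eta> \<Longrightarrow> onorm (blinfun_apply (H w)) \<le> ?B"
      using hbound[OF hess_cont eta] by (simp add: norm_blinfun.rep_eq[symmetric])
  qed (use z eta in auto)
  have sub: "cball x t \<subseteq> cball x \<eta>" using t by auto
  have "norm (\<phi> (x + v) - \<phi> (x + v') - D x \<bullet> ((x + v) - (x + v'))) \<le> norm ((x + v) - (x + v')) * (?B * t)"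
  proof (rule differentiable_bound_linearization[of "x + v'" "x + v" "cball x t" \<phi> "\<lambda>z h. D z \<bullet> h" x "?B * t"])
    fix \<tau> :: real assume \<tau>: "\<tau> \<in> {0..1}"
    have "x + v' + \<tau> *\<^sub>R (x + v - (x + v')) = x + ((1 - \<tau>) *\<^sub>R v' + \<tau> *\<^sub>R v)"
      by (simp add: algebra_simps)
    moreover have "norm ((1 - \<tau>) *\<^sub>R v' + \<tau> *\<^sub>R v) \<le> t"
    proof -
      have "norm ((1 - \<tau>) *\<^sub>R v' + \<tau> *\<^sub>R v) \<le> (1 - \<tau>) * norm v' + \<tau> * norm v"
        using \<tau> by (metis (no_types, lifting) atLeastAtMost_iff abs_of_nonneg diff_ge_0_iff_ge norm_scaleR norm_triangle_ineq order_trans order.refl add_mono)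
      also have "\<dots> \<le> (1 - \<tau>) * t + \<tau> * t"
        using \<tau> v v' by (intro add_mono mult_left_mono) auto
      finally show ?thesis by (simp add: algebra_simps)
    qed
    moreover have "\<And>w. norm w \<le> t \<Longrightarrow> x + w \<in> cball x t"
      by (simp add: dist_norm)
    ultimately show "x + v' + \<tau> *\<^sub>R (x + v - (x + v')) \<in> cball x t"
      by metis
  next
    fix z assume "z \<in> cball x t"
    then show "(\<phi> has_derivative (\<lambda>h. D z \<bullet> h)) (at z within cball x t)"
      using grad sub by (meson has_derivative_subset subsetD)
  next
    fix z assume z: "z \<in> cball x t"
    show "onorm ((\<lambda>h. D z \<bullet> h) - (\<lambda>h. D x \<bullet> h)) \<le> ?B * t"
    proof (rule onorm_le)
      fix h
      have "norm (((\<lambda>h. D z \<bullet> h) - (\<lambda>h. D x \<bullet> h)) h) = \<bar>(D z - D x) \<bullet> h\<bar>"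
        by (simp add: inner_diff_left)
      also have "\<dots> \<le> norm (D z - D x) * norm h" by (rule Cauchy_Schwarz_ineq2)
      also have "\<dots> \<le> (?B * t) * norm h"
      proof (rule mult_right_mono)
        have "norm (D z - D x) \<le> ?B * norm (z - x)" using lipD z sub by auto
        also have "\<dots> \<le> ?B * t"
        proof (rule mult_left_mono)
          show "norm (z - x) \<le> t" using z by (simp add: dist_norm norm_minus_commute)
          show "0 \<le> ?B" using hbound[OF hess_cont eta, of x] eta by (meson norm_ge_zero order_trans centre_in_cball less_imp_le)
        qed
        finally show "norm (D z - D x) \<le> ?B * t" .
      qed simp
      finally show "norm (((\<lambda>h. D z \<bullet> h) - (\<lambda>h. D x \<bullet> h)) h) \<le> ?B * t * norm h" .
    qed
  qed (use t in auto)
  then show ?thesis by simp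
qed
lemma omega_bdd:
  fixes \<phi> :: "'a::euclidean_space \<Rightarrow> real"
  assumes "bounded (\<phi> ` (- cball x \<eta>))"
  shows "bdd_above ((\<lambda>zw. \<bar>\<phi> (fst zw) - \<phi> (snd zw)\<bar>) ` {(z, w). z \<in> - cball x \<eta> \<and> w \<in> - cball x \<eta> \<and> dist z w \<le> a})"
proof -
  obtain M where M: "\<And>z. z \<in> - cball x \<eta> \<Longrightarrow> \<bar>\<phi> z\<bar> \<le> M"
    using assms unfolding bounded_iff by (metis ComplI image_eqI real_norm_def)
  show ?thesis
  proof (rule bdd_aboveI2[where M = "2 * M"])
    fix zw assume "zw \<in> {(z, w). z \<in> - cball x \<eta> \<and> w \<in> - cball x \<eta> \<and> dist z w \<le> a}"
    then have "\<bar>\<phi> (fst zw)\<bar> \<le> M" "\<bar>\<phi> (snd zw)\<bar> \<le> M" using M by auto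
    then show "\<bar>\<phi> (fst zw) - \<phi> (snd zw)\<bar> \<le> 2 * M" by linarith
  qed
qed

lemma omega_upper:
  fixes \<phi> :: "'a::euclidean_space \<Rightarrow> real"
  assumes "bounded (\<phi> ` (- cball x \<eta>))" "z \<notin> cball x \<eta>" "w \<notin> cball x \<eta>" "dist z w \<le> a"
  shows "\<bar>\<phi> z - \<phi> w\<bar> \<le> omega \<phi> x \<eta> a"
proof -
  have "\<bar>\<phi> (fst (z,w)) - \<phi> (snd (z,w))\<bar> \<le> omega \<phi> x \<eta> a"
    unfolding omega_def
    by (rule cSUP_upper[OF _ omega_bdd[OF assms(1)]]) (use assms in auto)
  then show ?thesis by simp
qed

lemma outside_point:
  fixes x :: "'a::euclidean_space"
  obtains z where "z \<notin> cball x \<eta>"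
proof -
  obtain b :: 'a where b: "b \<in> Basis" using nonempty_Basis by blast
  have "x + (\<bar>\<eta>\<bar> + 1) *\<^sub>R b \<notin> cball x \<eta>"
    using b by (simp add: dist_norm)
  then show ?thesis using that by blast
qed

lemma omega_nonneg:
  fixes \<phi> :: "'a::euclidean_space \<Rightarrow> real"
  assumes "bounded (\<phi> ` (- cball x \<eta>))" "0 \<le> a"
  shows "0 \<le> omega \<phi> x \<eta> a"
proof -
  obtain z :: 'a where "z \<notin> cball x \<eta>" by (rule outside_point)
  then have "\<bar>\<phi> z - \<phi> z\<bar> \<le> omega \<phi> x \<eta> a" using assms by (intro omega_upper) auto
  then show ?thesis by simp
qed

lemma omega_mono:
  fixes \<phi> :: "'a::euclidean_space \<Rightarrow> real"
  assumes "bounded (\<phi> ` (- cball x \<eta>))" "0 \<le> a" "a \<le> b"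
  shows "omega \<phi> x \<eta> a \<le> omega \<phi> x \<eta> b"
  unfolding omega_def
proof (rule cSUP_subset_mono)
  obtain z :: 'a where "z \<notin> cball x \<eta>" by (rule outside_point)
  then show "{(z, w). z \<in> - cball x \<eta> \<and> w \<in> - cball x \<eta> \<and> dist z w \<le> a} \<noteq> {}"
    using assms by (metis (mono_tags, lifting) ComplI case_prodI dist_self mem_Collect_eq empty_iff)
qed (use omega_bdd[OF assms(1)] assms in auto)
lemma circle_dist:
  fixes u v :: "'a::euclidean_space"
  assumes u: "norm u = 1" and v: "norm v = 1" and uv: "u \<bullet> v = 0"
  shows "norm ((cos a *\<^sub>R u + sin a *\<^sub>R v) - (cos b *\<^sub>R u + sin b *\<^sub>R v)) = 2 * \<bar>sin ((a - b) / 2)\<bar>"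
proof -
  have uu: "u \<bullet> u = 1" and vv: "v \<bullet> v = 1" using u v by (simp_all flip: power2_norm_eq_inner)
  have vu: "v \<bullet> u = 0" using uv by (simp add: inner_commute)
  let ?z = "(cos a - cos b) *\<^sub>R u + (sin a - sin b) *\<^sub>R v"
  have eq: "(cos a *\<^sub>R u + sin a *\<^sub>R v) - (cos b *\<^sub>R u + sin b *\<^sub>R v) = ?z"
    by (simp add: algebra_simps)
  have "norm ?z ^ 2 = (cos a - cos b)^2 + (sin a - sin b)^2"
    by (simp only: power2_norm_eq_inner) (simp add: inner_add_left inner_add_right uu vv uv vu power2_eq_square algebra_simps)
  also have "\<dots> = 2 - 2 * cos (a - b)"
    by (simp add: cos_diff power2_diff algebra_simps)
  also have "\<dots> = (2 * \<bar>sin ((a - b) / 2)\<bar>)^2"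
  proof -
    have "a - b = 2 * ((a - b)/2)" by simp
    then have "cos (a - b) = cos (2 * ((a - b)/2))" by (rule arg_cong)
    also have "\<dots> = 1 - 2 * (sin ((a - b)/2))^2" by (rule cos_double_sin)
    finally show ?thesis by (simp add: power_mult_distrib)
  qed
  finally have "norm ?z ^ 2 = (2 * \<bar>sin ((a - b) / 2)\<bar>)^2" .
  then have "norm ?z = 2 * \<bar>sin ((a - b) / 2)\<bar>"
    by (rule power2_eq_imp_eq) auto
  then show ?thesis using eq by simp
qed

lemma unit_circle_norm:
  fixes u v :: "'a::euclidean_space"
  assumes u: "norm u = 1" and v: "norm v = 1" and uv: "u \<bullet> v = 0"
  shows "norm (cos a *\<^sub>R u + sin a *\<^sub>R v) = 1"
proof -
  have uu: "u \<bullet> u = 1" and vv: "v \<bullet> v = 1" using u v by (simp_all flip: power2_norm_eq_inner)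
  have vu: "v \<bullet> u = 0" using uv by (simp add: inner_commute)
  have "norm (cos a *\<^sub>R u + sin a *\<^sub>R v) ^ 2 = 1"
    by (simp only: power2_norm_eq_inner) (simp add: inner_add_left inner_add_right uu vv uv vu algebra_simps flip: power2_eq_square)
  then show ?thesis by (smt (verit) norm_ge_zero power2_eq_1_iff)
qed

lemma circle_param:
  fixes u u' :: "'a::euclidean_space"
  assumes N2: "2 \<le> DIM('a)" and u: "norm u = 1" and u': "norm u' = 1"
  obtains v \<theta> where "norm v = 1" "u \<bullet> v = 0" "0 \<le> \<theta>" "\<theta> \<le> pi"
    "u' = cos \<theta> *\<^sub>R u + sin \<theta> *\<^sub>R v"
proof -
  define c where "c = u \<bullet> u'"
  have uu: "u \<bullet> u = 1" and uu': "u' \<bullet> u' = 1" using u u' by (simp_all flip: power2_norm_eq_inner)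
  have "\<bar>c\<bar> \<le> 1" unfolding c_def using Cauchy_Schwarz_ineq2[of u u'] u u' by simp
  then have c1: "-1 \<le> c" "c \<le> 1" by auto
  define r where "r = u' - c *\<^sub>R u"
  have ur: "u \<bullet> r = 0" by (simp add: r_def inner_diff_right uu c_def)
  have "norm r ^ 2 = 1 - c^2"
    by (simp only: power2_norm_eq_inner) (simp add: r_def inner_diff_left inner_diff_right uu uu' c_def inner_commute power2_eq_square algebra_simps)
  then have nr: "norm r = sqrt (1 - c^2)" by (simp add: real_sqrt_unique)
  obtain v0 where v0: "v0 \<noteq> 0" "orthogonal u v0" using orthogonal_to_vector_exists[OF N2] by blast
  define v where "v = (if r = 0 then v0 /\<^sub>R norm v0 else r /\<^sub>R norm r)"
  have nv: "norm v = 1" using v0 by (simp add: v_def)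
  have uv: "u \<bullet> v = 0" using v0 ur by (auto simp: v_def orthogonal_def)
  have rv: "r = norm r *\<^sub>R v" by (simp add: v_def)
  define \<theta> where "\<theta> = arccos c"
  have "cos \<theta> = c" using c1 by (simp add: \<theta>_def)
  moreover have "sin \<theta> = norm r" using c1 by (simp add: \<theta>_def sin_arccos nr)
  ultimately have "u' = cos \<theta> *\<^sub>R u + sin \<theta> *\<^sub>R v"
    using rv by (simp add: r_def algebra_simps)
  moreover have "0 \<le> \<theta>" "\<theta> \<le> pi" by (simp_all add: \<theta>_def arccos_lbound arccos_ubound c1)
  ultimately show ?thesis using that nv uv by blast
qed
lemma chain_bound:
  fixes \<phi> :: "'a::euclidean_space \<Rightarrow> real"
  assumes N2: "2 \<le> DIM('a)" and ob: "bounded (\<phi> ` (- cball x \<eta>))" and eta: "\<eta> > 0" and t: "\<eta> < t"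
    and u: "norm u = 1" and u': "norm u' = 1"
  shows "\<bar>\<phi> (x + t *\<^sub>R u) - \<phi> (x + t *\<^sub>R u')\<bar> \<le> 2 * (1 + t) * omega \<phi> x \<eta> (norm (u - u'))"
proof -
  obtain v \<theta> where v: "norm v = 1" "u \<bullet> v = 0" and th: "0 \<le> \<theta>" "\<theta> \<le> pi"
    and u'eq: "u' = cos \<theta> *\<^sub>R u + sin \<theta> *\<^sub>R v"
    using circle_param[OF N2 u u'] by blast
  define w where "w a = cos a *\<^sub>R u + sin a *\<^sub>R v" for a
  have wd: "norm (w a - w b) = 2 * \<bar>sin ((a - b) / 2)\<bar>" for a b
    unfolding w_def by (rule circle_dist[OF u v])
  have wn: "norm (w a) = 1" for a unfolding w_def by (rule unit_circle_norm[OF u v])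
  define d where "d = norm (u - u')"
  have w0: "w 0 = u" by (simp add: w_def)
  have wth: "w \<theta> = u'" by (simp add: w_def u'eq)
  have "d = 2 * \<bar>sin ((0 - \<theta>) / 2)\<bar>" unfolding d_def using wd[of 0 \<theta>] w0 wth by simp
  also have "\<dots> = 2 * sin (\<theta> / 2)"
    using th by (simp add: sin_ge_zero)
  finally have d_eq: "d = 2 * sin (\<theta> / 2)" .
  have d_ge: "\<theta> / 2 \<le> d"
    using sin_ge_half[of "\<theta>/2"] th d_eq by simp
  have d0: "0 \<le> d" by (simp add: d_def)
  define n where "n = nat \<lceil>2 * t\<rceil>"
  have tpos: "0 < t" using eta t by simp
  have n_ge: "2 * t \<le> real n"
  proof -
    have "0 \<le> \<lceil>2 * t\<rceil>" using tpos by simp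
    then have "real n = of_int \<lceil>2 * t\<rceil>" by (simp add: n_def)
    then show ?thesis by simp
  qed
  have n_le: "real n \<le> 2 * t + 1" using tpos by (simp add: n_def)
  have "0 < real n" using tpos n_ge by linarith
  then have n_pos: "0 < n" by simp
  define P where "P k = x + t *\<^sub>R w (real k * \<theta> / real n)" for k :: nat
  have Pout: "P k \<notin> cball x \<eta>" for k
    using wn t tpos by (simp add: P_def dist_norm)
  have Pstep: "dist (P k) (P (Suc k)) \<le> d" for k
  proof -
    have "dist (P k) (P (Suc k)) = t * norm (w (real k * \<theta> / real n) - w (real (Suc k) * \<theta> / real n))"
      using tpos by (simp add: P_def dist_norm flip: scaleR_diff_right)
    also have "\<dots> = t * (2 * \<bar>sin ((real k * \<theta> / real n - real (Suc k) * \<theta> / real n) / 2)\<bar>)"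
      by (simp add: wd)
    also have "(real k * \<theta> / real n - real (Suc k) * \<theta> / real n) / 2 = - (\<theta> / (2 * real n))"
      using n_pos by (simp add: field_simps)
    also have "\<bar>sin (- (\<theta> / (2 * real n)))\<bar> = sin (\<theta> / (2 * real n))"
    proof -
      have "1 \<le> 2 * real n" using n_pos by simp
      then have "\<theta> / (2 * real n) \<le> \<theta> / 1" using th by (intro divide_left_mono) auto
      then have "\<theta> / (2 * real n) \<le> pi" using th by simp
      then show ?thesis using th by (simp add: sin_ge_zero)
    qed
    also have "t * (2 * sin (\<theta> / (2 * real n))) \<le> t * (2 * (\<theta> / (2 * real n)))"
      using tpos th n_pos by (intro mult_left_mono sin_x_le_x) auto
    also have "\<dots> = t * \<theta> / real n" using n_pos by simp
    also have "\<dots> \<le> \<theta> / 2"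
    proof -
      have "t * \<theta> \<le> (real n / 2) * \<theta>" using n_ge th by (intro mult_right_mono) auto
      then show ?thesis using n_pos by (simp add: field_simps)
    qed
    also have "\<dots> \<le> d" by (rule d_ge)
    finally show ?thesis .
  qed
  have tele: "\<bar>\<phi> (P 0) - \<phi> (P m)\<bar> \<le> real m * omega \<phi> x \<eta> d" for m
  proof (induction m)
    case 0 then show ?case by simp
  next
    case (Suc m)
    have "\<bar>\<phi> (P m) - \<phi> (P (Suc m))\<bar> \<le> omega \<phi> x \<eta> d"
      by (rule omega_upper[OF ob Pout Pout Pstep])
    then show ?case using Suc.IH by (simp add: algebra_simps)
  qed
  have P0: "P 0 = x + t *\<^sub>R u" by (simp add: P_def w0)
  have Pn: "P n = x + t *\<^sub>R u'" using n_pos by (simp add: P_def wth)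
  have om0: "0 \<le> omega \<phi> x \<eta> d" by (rule omega_nonneg[OF ob d0])
  have "\<bar>\<phi> (x + t *\<^sub>R u) - \<phi> (x + t *\<^sub>R u')\<bar> \<le> real n * omega \<phi> x \<eta> d"
    using tele[of n] P0 Pn by simp
  also have "\<dots> \<le> 2 * (1 + t) * omega \<phi> x \<eta> d"
    using n_le om0 by (intro mult_right_mono) auto
  finally show ?thesis by (simp add: d_def)
qed

lemma isCont_aux: "0 < (t::real) \<Longrightarrow> isCont (\<lambda>t. C * t powr r * (c * (1 + t))) t"
  by (intro continuous_intros) auto

lemma powr_shift:
  fixes t :: real assumes "0 < t"
  shows "t powr a * t = t powr (a + 1)"
  using assms by (simp add: powr_add)

lemma powr_mult_aux:
  fixes t :: real assumes "0 < t"
  shows "t powr (-1 - 2 * s) * (a*t + b*t^2) = a * t powr (-2 * s) + b * t powr (1-2 * s)"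
proof -
  have 1: "t powr (-1 - 2 * s) * t = t powr (-2 * s)"
    using powr_shift[OF assms, of "-1 - 2 * s"] by simp
  have "t powr (-1 - 2 * s) * t^2 = (t powr (-1 - 2 * s) * t) * t"
    by (simp add: power2_eq_square)
  also have "\<dots> = t powr (1 - 2 * s)"
    using powr_shift[OF assms, of "-2 * s"] by (simp add: 1)
  finally show ?thesis using 1 by (simp add: algebra_simps)
qed

lemma deriv_powr_aux:
  fixes t :: real assumes "0 < t" "r \<noteq> 0" "q = r - 1"
  shows "((\<lambda>t. t powr r / r) has_real_derivative t powr q) (at t)"
proof -
  have "((\<lambda>t. t powr r) has_real_derivative r * t powr (r - 1)) (at t)"
    using assms(1) by (rule has_real_derivative_powr)
  then have "((\<lambda>t. t powr r / r) has_real_derivative r * t powr (r - 1) / r) (at t)"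
    by (rule DERIV_cdivide)
  then show ?thesis using assms by simp
qed

lemma alg1g: "k \<noteq> 0 \<Longrightarrow> m \<noteq> 0 \<Longrightarrow> (c::real) * (a * (y / k) + b * (y' / m)) - c * (a * (x / k) + b * (x' / m)) = c * (a * (x - y) / (- k) + b * (y' - x') / m)"
  by (simp add: field_simps)
lemma alg2g: "k \<noteq> 0 \<Longrightarrow> m \<noteq> 0 \<Longrightarrow> 0 - (c::real) * (y / (- m) + y' / (- k)) = c * (y / m + y' / k)"
  by (simp add: field_simps)
lemma alg1: "2 * s - 1 \<noteq> (0::real) \<Longrightarrow> 2 - 2 * s \<noteq> 0 \<Longrightarrow> (c::real) * (a * (y / (1 - 2 * s)) + b * (y' / (2 - 2 * s))) - c * (a * (x / (1 - 2 * s)) + b * (x' / (2 - 2 * s))) = c * (a * (x - y) / (2 * s - 1) + b * (y' - x') / (2 - 2 * s))"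
  using alg1g[of "1 - 2 * s" "2 - 2 * s" c a y b y' x x'] by simp
lemma alg2: "s \<noteq> 0 \<Longrightarrow> 2 * s - 1 \<noteq> (0::real) \<Longrightarrow> 0 - (c::real) * (y / (- 2 * s) + y' / (1 - 2 * s)) = c * (y / (2 * s) + y' / (2 * s - 1))"
  using alg2g[of "2 * s - 1" "2 * s" c y y'] by simp

lemma near_int:
  assumes eps: "0 < \<epsilon>" "\<epsilon> < \<eta>" and s: "1/2 < s" "s < 1"
  shows "set_integrable lborel {\<epsilon><..<\<eta>} (\<lambda>t. Cs s * t powr (-1-2 * s) * (a*t + b*t^2))"
    and "(LINT t:{\<epsilon><..<\<eta>}|lborel. Cs s * t powr (-1-2 * s) * (a*t + b*t^2))
          = Cs s * (a*(\<epsilon> powr (1-2 * s) - \<eta> powr (1-2 * s))/(2 * s-1) + b*(\<eta> powr (2-2 * s) - \<epsilon> powr (2-2 * s))/(2-2 * s))"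
proof -
  let ?f = "\<lambda>t. Cs s * t powr (-1-2 * s) * (a*t + b*t^2)"
  let ?F = "\<lambda>t. Cs s * (a * (t powr (1-2 * s) / (1-2 * s)) + b * (t powr (2-2 * s) / (2-2 * s)))"
  have cont: "continuous_on {\<epsilon>..\<eta>} ?f"
    using eps by (intro continuous_intros) auto
  have "interval_lebesgue_integrable lborel \<epsilon> \<eta> ?f"
    by (rule interval_integrable_continuous_on) (use eps cont in auto)
  then show "set_integrable lborel {\<epsilon><..<\<eta>} ?f"
    using eps by (simp add: interval_lebesgue_integrable_def)
  have s1: "1 - 2 * s \<noteq> 0" "2 - 2 * s \<noteq> 0" "2 * s - 1 \<noteq> 0" using s by auto
  have "(LBINT t=\<epsilon>..\<eta>. ?f t) = ?F \<eta> - ?F \<epsilon>"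
  proof (rule interval_integral_FTC_finite)
    show "continuous_on {min \<epsilon> \<eta>..max \<epsilon> \<eta>} ?f" using cont eps by simp
    fix t assume t: "min \<epsilon> \<eta> \<le> t" "t \<le> max \<epsilon> \<eta>"
    then have tp: "0 < t" using eps by simp
    have "(?F has_real_derivative Cs s * (a * t powr (-2 * s) + b * t powr (1-2 * s))) (at t)"
      using tp s1 by (intro DERIV_cmult DERIV_add deriv_powr_aux) auto
    then have "(?F has_real_derivative ?f t) (at t)"
      using powr_mult_aux[OF tp, of s a b] by (simp add: mult.assoc)
    then show "(?F has_vector_derivative ?f t) (at t within {min \<epsilon> \<eta>..max \<epsilon> \<eta>})"
      by (simp add: has_real_derivative_iff_has_vector_derivative has_vector_derivative_at_within)
  qed
  moreover have "(LBINT t=\<epsilon>..\<eta>. ?f t) = (LINT t:{\<epsilon><..<\<eta>}|lborel. ?f t)"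
    using eps by (simp add: interval_lebesgue_integral_def)
  moreover have "?F \<eta> - ?F \<epsilon> = Cs s * (a*(\<epsilon> powr (1-2 * s) - \<eta> powr (1-2 * s))/(2 * s-1) + b*(\<eta> powr (2-2 * s) - \<epsilon> powr (2-2 * s))/(2-2 * s))"
    using s1 by (intro alg1) auto
  ultimately show "(LINT t:{\<epsilon><..<\<eta>}|lborel. ?f t) = Cs s * (a*(\<epsilon> powr (1-2 * s) - \<eta> powr (1-2 * s))/(2 * s-1) + b*(\<eta> powr (2-2 * s) - \<epsilon> powr (2-2 * s))/(2-2 * s))"
    by simp
qed

lemma far_int:
  assumes eta: "0 < \<eta>" and s: "1/2 < s" "s < 1" and c: "0 \<le> c" and Cs: "0 \<le> Cs s"
  shows "set_integrable lborel {\<eta><..} (\<lambda>t. Cs s * t powr (-1-2 * s) * (c * (1 + t)))"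
    and "(LINT t:{\<eta><..}|lborel. Cs s * t powr (-1-2 * s) * (c * (1 + t)))
          = Cs s * c * (\<eta> powr (-2 * s) / (2 * s) + \<eta> powr (1-2 * s) / (2 * s-1))"
proof -
  let ?f = "\<lambda>t. Cs s * t powr (-1-2 * s) * (c * (1 + t))"
  let ?F = "\<lambda>t. Cs s * c * (t powr (-2 * s) / (-2 * s) + t powr (1-2 * s) / (1-2 * s))"
  have s1: "1 - 2 * s \<noteq> 0" "- 2 * s \<noteq> 0" "s \<noteq> 0" using s by auto
  have d2: "(?F has_real_derivative ?f t) (at t)" if t: "ereal \<eta> < ereal t" "ereal t < \<infinity>" for t
  proof -
    have tp: "0 < t" using eta t by simp
    have "(?F has_real_derivative Cs s * c * (t powr (-1-2 * s) + t powr (-2 * s))) (at t)"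
      using tp s1 by (intro DERIV_cmult DERIV_add deriv_powr_aux) auto
    moreover have "t powr (-1-2 * s) * (1 + t) = t powr (-1-2 * s) + t powr (-2 * s)"
      using powr_shift[OF tp, of "-1-2 * s"] by (simp add: algebra_simps)
    ultimately show "(?F has_real_derivative ?f t) (at t)"
      by (simp add: algebra_simps)
  qed
  have d3: "isCont ?f t" if t: "ereal \<eta> < ereal t" "ereal t < \<infinity>" for t
    using eta t by (intro isCont_aux) simp
  have d4: "AE x in lborel. ereal \<eta> < ereal x \<longrightarrow> ereal x < \<infinity> \<longrightarrow> 0 \<le> ?f x"
    by (intro AE_I2 impI mult_nonneg_nonneg Cs c) (use eta in auto)
  have d5: "((?F \<circ> real_of_ereal) \<longlongrightarrow> ?F \<eta>) (at_right (ereal \<eta>))"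
    unfolding ereal_tendsto_simps
  proof (rule tendsto_mono[OF at_le])
    have "(?F has_real_derivative Cs s * c * (\<eta> powr (-1-2 * s) + \<eta> powr (-2 * s))) (at \<eta>)"
      using eta s1 by (intro DERIV_cmult DERIV_add deriv_powr_aux) auto
    then have "isCont ?F \<eta>" by (rule DERIV_isCont)
    then show "(?F \<longlongrightarrow> ?F \<eta>) (at \<eta>)" by (simp add: isCont_def)
  qed simp
  have d6: "((?F \<circ> real_of_ereal) \<longlongrightarrow> 0) (at_left \<infinity>)"
    unfolding ereal_tendsto_simps
  proof -
    have 1: "((\<lambda>t::real. t powr (-2 * s)) \<longlongrightarrow> 0) at_top"
      by (rule tendsto_neg_powr) (use s in \<open>auto intro: filterlim_ident\<close>)
    have 2: "((\<lambda>t::real. t powr (1-2 * s)) \<longlongrightarrow> 0) at_top"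
      by (rule tendsto_neg_powr) (use s in \<open>auto intro: filterlim_ident\<close>)
    have "(?F \<longlongrightarrow> Cs s * c * (0 / (-2 * s) + 0 / (1-2 * s))) at_top"
      by (intro tendsto_mult tendsto_const tendsto_add tendsto_divide 1 2) (use s in auto)
    then show "(?F \<longlongrightarrow> 0) at_top" by simp
  qed
  have d1: "ereal \<eta> < \<infinity>" by simp
  note FTC = interval_integral_FTC_nonneg[OF d1 d2 d3 d4 d5 d6]
  show "set_integrable lborel {\<eta><..} ?f" using FTC(1) by simp
  have "(LBINT t=\<eta>..\<infinity>. ?f t) = (LINT t:{\<eta><..}|lborel. ?f t)"
    by (simp add: interval_lebesgue_integral_def)
  with FTC show "(LINT t:{\<eta><..}|lborel. ?f t) = Cs s * c * (\<eta> powr (-2 * s) / (2 * s) + \<eta> powr (1-2 * s) / (2 * s-1))"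
    using s1 alg2[of s "Cs s * c" "\<eta> powr (-2 * s)" "\<eta> powr (1-2 * s)"] by simp
qed

lemma Cs_pos: assumes "0 < s" "s < 1" shows "0 < Cs s"
  using assms by (simp add: Cs_def Gamma_real_pos)

lemma muS_conv:
  fixes g :: "real \<Rightarrow> real"
  assumes eps: "0 < \<epsilon>" and s: "1/2 < s" "s < 1"
    and g[measurable]: "g \<in> borel_measurable borel" and M: "\<And>t. \<bar>g t\<bar> \<le> M"
  shows "set_integrable lborel {\<epsilon><..} (\<lambda>t. Cs s * t powr (-1-2 * s) * g t)"
    and "(LINT t:{\<epsilon><..}|muS s. g t) = (LINT t:{\<epsilon><..}|lborel. Cs s * t powr (-1-2 * s) * g t)"
proof -
  have Cs: "0 < Cs s" using s by (intro Cs_pos) auto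
  have M0: "0 \<le> M" using M[of 0] by simp
  have int1: "set_integrable lborel {\<epsilon><..} (\<lambda>t. Cs s * t powr (-1-2 * s) * (1 * (1 + t)))"
    using far_int(1)[OF eps s, of 1] Cs by simp
  then have int2: "set_integrable lborel {\<epsilon><..} (\<lambda>t. M * (Cs s * t powr (-1-2 * s) * (1 * (1 + t))))"
    by (rule set_integrable_mult_right)
  show "set_integrable lborel {\<epsilon><..} (\<lambda>t. Cs s * t powr (-1-2 * s) * g t)"
  proof (rule set_integrable_bound[OF int2])
    show "set_borel_measurable lborel {\<epsilon><..} (\<lambda>t. Cs s * t powr (-1-2 * s) * g t)"
      unfolding set_borel_measurable_def by measurable
    show "AE x in lborel. x \<in> {\<epsilon><..} \<longrightarrow> norm (Cs s * x powr (-1-2 * s) * g x) \<le> norm (M * (Cs s * x powr (-1-2 * s) * (1 * (1 + x))))"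
    proof (intro AE_I2 impI)
      fix x assume x: "x \<in> {\<epsilon><..}"
      then have xp: "0 < x" using eps by simp
      have w0: "0 \<le> Cs s * x powr (-1-2 * s)" using Cs by simp
      have "norm (Cs s * x powr (-1-2 * s) * g x) = Cs s * x powr (-1-2 * s) * \<bar>g x\<bar>"
        using w0 Cs by (simp add: abs_mult)
      also have "\<dots> \<le> Cs s * x powr (-1-2 * s) * (M * (1 + x))"
      proof (rule mult_left_mono[OF _ w0])
        have "M \<le> M * (1 + x)" using M0 xp by (simp add: algebra_simps)
        then show "\<bar>g x\<bar> \<le> M * (1 + x)" using M[of x] by linarith
      qed
      also have "\<dots> = norm (M * (Cs s * x powr (-1-2 * s) * (1 * (1 + x))))"
        using w0 M0 xp Cs by (simp add: abs_mult)
      finally show "norm (Cs s * x powr (-1-2 * s) * g x) \<le> norm (M * (Cs s * x powr (-1-2 * s) * (1 * (1 + x))))" .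
    qed
  qed
  have "(LINT t:{\<epsilon><..}|muS s. g t) = integral\<^sup>L (muS s) (\<lambda>t. indicator {\<epsilon><..} t *\<^sub>R g t)"
    by (simp add: set_lebesgue_integral_def)
  also have "\<dots> = integral\<^sup>L lborel (\<lambda>t. (indicator {(0::real)<..} t * Cs s * t powr (-1 - 2 * s)) *\<^sub>R (indicator {\<epsilon><..} t *\<^sub>R g t))"
    unfolding muS_def
    by (rule integral_density) (use Cs in \<open>auto intro!: AE_I2 split: split_indicator\<close>)
  also have "\<dots> = integral\<^sup>L lborel (\<lambda>t. indicator {\<epsilon><..} t *\<^sub>R (Cs s * t powr (-1-2 * s) * g t))"
    using eps by (intro Bochner_Integration.integral_cong refl) (auto split: split_indicator)
  also have "\<dots> = (LINT t:{\<epsilon><..}|lborel. Cs s * t powr (-1-2 * s) * g t)"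
    by (simp add: set_lebesgue_integral_def)
  finally show "(LINT t:{\<epsilon><..}|muS s. g t) = (LINT t:{\<epsilon><..}|lborel. Cs s * t powr (-1-2 * s) * g t)" .
qed

lemma final_alg:
  fixes p B2 K1 K2 Kf d A od oA :: real
  assumes "0 < p" "0 \<le> B2" "0 < K1" "0 \<le> K2" "0 \<le> Kf" "0 \<le> d" "0 \<le> A" "0 \<le> od" "0 \<le> oA"
    and h1: "d \<le> A \<Longrightarrow> od \<le> oA"
    and h2: "A < d \<Longrightarrow> 16 * B2 * K2 < p * d * K1"
    and h3: "A < d \<Longrightarrow> 8 * od * Kf < p * d^2 * K1"
  shows "(- p * d^2 / 2) * K1 + (B2 * d) * K2 + (2 * od) * Kf \<le> 4 * B2 * A * K2 + 2 * Kf * oA"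
proof (cases "d \<le> A")
  case True
  have "0 \<le> p * d^2 * K1" using assms by simp
  moreover have "B2 * d * K2 \<le> B2 * A * K2" using True assms by (intro mult_right_mono mult_left_mono) auto
  moreover have "B2 * A * K2 \<ge> 0" using assms by simp
  moreover have "od * Kf \<le> oA * Kf" using h1[OF True] assms by (intro mult_right_mono) auto
  ultimately show ?thesis by (simp add: algebra_simps)
next
  case False
  then have Ad: "A < d" by simp
  have "16 * B2 * K2 * d \<le> p * d * K1 * d" using h2[OF Ad] assms by (intro mult_right_mono) auto
  then have a: "16 * (B2 * d * K2) \<le> p * d^2 * K1" by (simp add: power2_eq_square algebra_simps)
  have b: "8 * (od * Kf) < p * d^2 * K1" using h3[OF Ad] by (simp add: algebra_simps)
  have "0 \<le> 4 * B2 * A * K2 + 2 * Kf * oA" using assms by simp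
  moreover have "0 \<le> p * d^2 * K1" using assms by simp
  ultimately show ?thesis using a b by (simp add: algebra_simps)
qed
lemma sigma_facts:
  fixes \<sigma> :: real assumes "\<sigma> = 1 \<or> \<sigma> = -1"
  shows "\<bar>\<sigma>\<bar> = 1" "\<sigma> * \<sigma> = 1"
  using assms by auto

lemma near_pt:
  fixes \<phi> :: "'a::euclidean_space \<Rightarrow> real" and D :: "'a \<Rightarrow> 'a" and H :: "'a \<Rightarrow> ('a \<Rightarrow>\<^sub>L 'a)"
  assumes eta: "\<eta> > 0"
    and grad: "\<And>z. z \<in> cball x \<eta> \<Longrightarrow> (\<phi> has_derivative (\<lambda>h. D z \<bullet> h)) (at z within cball x \<eta>)"
    and hess: "\<And>z. z \<in> cball x \<eta> \<Longrightarrow> (D has_derivative blinfun_apply (H z)) (at z within cball x \<eta>)"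
    and hess_cont: "continuous_on (cball x \<eta>) H"
    and px: "D x \<noteq> 0"
    and sig: "\<sigma> = 1 \<or> \<sigma> = -1" and y: "norm y = 1" and t: "0 < t" "t \<le> \<eta>"
  shows "\<sigma> * (\<phi> (x + (\<sigma> * t) *\<^sub>R y) - \<phi> (x + (\<sigma> * t) *\<^sub>R (D x /\<^sub>R norm (D x))))
     \<le> (- norm (D x) * (norm (y - D x /\<^sub>R norm (D x)))^2 / 2) * t
        + ((SUP z\<in>ball x \<eta>. norm (H z)) * norm (y - D x /\<^sub>R norm (D x))) * t^2"
proof -
  define p where "p = norm (D x)"
  define e where "e = D x /\<^sub>R p"
  define d where "d = norm (y - e)"
  define B2 where "B2 = (SUP z\<in>ball x \<eta>. norm (H z))"
  have p: "0 < p" using px by (simp add: p_def)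
  have ne: "norm e = 1" using p by (simp add: e_def p_def)
  have ee: "e \<bullet> e = 1" using ne by (simp flip: power2_norm_eq_inner)
  have yy: "y \<bullet> y = 1" using y by (simp flip: power2_norm_eq_inner)
  have Dxe: "D x = p *\<^sub>R e" using p by (simp add: e_def)
  have d2: "d^2 = 2 - 2 * (e \<bullet> y)"
    by (simp only: d_def power2_norm_eq_inner) (simp add: inner_diff_left inner_diff_right ee yy inner_commute)
  have ey: "e \<bullet> y = 1 - d^2 / 2" using d2 by (simp add: field_simps)
  have key: "D x \<bullet> (y - e) = - p * d^2 / 2"
    by (simp add: Dxe inner_diff_right ee ey algebra_simps)
  define v where "v = (\<sigma> * t) *\<^sub>R y"
  define v' where "v' = (\<sigma> * t) *\<^sub>R e"
  have s1: "\<bar>\<sigma>\<bar> = 1" "\<sigma> * \<sigma> = 1" using sigma_facts[OF sig] by auto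
  have nv: "norm v \<le> t" using s1 t y by (simp add: v_def abs_mult)
  have nv': "norm v' \<le> t" using s1 t ne by (simp add: v'_def abs_mult)
  have vv: "v - v' = (\<sigma> * t) *\<^sub>R (y - e)" by (simp add: v_def v'_def algebra_simps)
  have nvv: "norm (v - v') = t * d" using s1 t by (simp add: vv d_def abs_mult)
  have tay: "\<bar>\<phi> (x + v) - \<phi> (x + v') - D x \<bullet> (v - v')\<bar> \<le> norm (v - v') * (B2 * t)"
    unfolding B2_def by (rule taylor_bound[OF eta grad hess hess_cont]) (use t nv nv' in auto)
  have lin: "\<sigma> * (D x \<bullet> (v - v')) = t * (- p * d^2 / 2)"
  proof -
    have "\<sigma> * (D x \<bullet> (v - v')) = (\<sigma> * \<sigma>) * t * (D x \<bullet> (y - e))" by (simp add: vv)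
    then show ?thesis using s1 key by simp
  qed
  define err where "err = \<phi> (x + v) - \<phi> (x + v') - D x \<bullet> (v - v')"
  have "\<sigma> * (\<phi> (x + v) - \<phi> (x + v')) = \<sigma> * (D x \<bullet> (v - v')) + \<sigma> * err"
    by (simp add: err_def algebra_simps)
  also have "\<sigma> * err \<le> \<bar>err\<bar>" using s1 by (metis abs_ge_self abs_mult mult_1)
  also have "\<bar>err\<bar> \<le> t * d * (B2 * t)" using tay nvv by (simp add: err_def)
  finally have "\<sigma> * (\<phi> (x + v) - \<phi> (x + v')) \<le> t * (- p * d^2 / 2) + t * d * (B2 * t)"
    using lin by simp
  then show ?thesis
    by (simp add: v_def v'_def e_def p_def d_def B2_def power2_eq_square algebra_simps)
qed

lemma far_pt:
  fixes \<phi> :: "'a::euclidean_space \<Rightarrow> real"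
  assumes N2: "2 \<le> DIM('a)" and ob: "bounded (\<phi> ` (- cball x \<eta>))" and eta: "\<eta> > 0"
    and sig: "\<sigma> = 1 \<or> \<sigma> = -1" and y: "norm y = 1" and e: "norm e = 1" and t: "\<eta> < t"
  shows "\<sigma> * (\<phi> (x + (\<sigma> * t) *\<^sub>R y) - \<phi> (x + (\<sigma> * t) *\<^sub>R e)) \<le> 2 * omega \<phi> x \<eta> (norm (y - e)) * (1 + t)"
proof -
  have s1: "\<bar>\<sigma>\<bar> = 1" using sigma_facts[OF sig] by auto
  have u: "norm (\<sigma> *\<^sub>R y) = 1" "norm (\<sigma> *\<^sub>R e) = 1" using s1 y e by auto
  have eq: "(\<sigma> * t) *\<^sub>R y = t *\<^sub>R (\<sigma> *\<^sub>R y)" "(\<sigma> * t) *\<^sub>R e = t *\<^sub>R (\<sigma> *\<^sub>R e)" by (simp_all add: mult.commute)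
  have nd: "norm (\<sigma> *\<^sub>R y - \<sigma> *\<^sub>R e) = norm (y - e)"
    using s1 by (simp flip: scaleR_diff_right)
  have "\<sigma> * (\<phi> (x + (\<sigma> * t) *\<^sub>R y) - \<phi> (x + (\<sigma> * t) *\<^sub>R e)) \<le> \<bar>\<phi> (x + (\<sigma> * t) *\<^sub>R y) - \<phi> (x + (\<sigma> * t) *\<^sub>R e)\<bar>"
    using s1 by (metis abs_ge_self abs_mult mult_1)
  also have "\<dots> \<le> 2 * (1 + t) * omega \<phi> x \<eta> (norm (\<sigma> *\<^sub>R y - \<sigma> *\<^sub>R e))"
    unfolding eq by (rule chain_bound[OF N2 ob eta t u])
  finally show ?thesis using nd by (simp add: algebra_simps)
qed

lemma split_est:
  fixes g :: "real \<Rightarrow> real"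
  assumes eps: "0 < \<epsilon>" "\<epsilon> < \<eta>" and s: "1/2 < s" "s < 1"
    and g[measurable]: "g \<in> borel_measurable borel" and M: "\<And>t. \<bar>g t\<bar> \<le> M"
    and near: "\<And>t. \<epsilon> < t \<Longrightarrow> t < \<eta> \<Longrightarrow> g t \<le> a * t + b * t^2"
    and far: "\<And>t. \<eta> < t \<Longrightarrow> g t \<le> c * (1 + t)" and c: "0 \<le> c"
  shows "(LINT t:{\<epsilon><..}|lborel. Cs s * t powr (-1-2 * s) * g t)
    \<le> Cs s * (a*(\<epsilon> powr (1-2 * s) - \<eta> powr (1-2 * s))/(2 * s-1) + b*(\<eta> powr (2-2 * s) - \<epsilon> powr (2-2 * s))/(2-2 * s))
      + Cs s * c * (\<eta> powr (-2 * s) / (2 * s) + \<eta> powr (1-2 * s) / (2 * s-1))"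
proof -
  let ?f = "\<lambda>t. Cs s * t powr (-1-2 * s) * g t"
  have Cs: "0 < Cs s" using s by (intro Cs_pos) auto
  have eta: "0 < \<eta>" using eps by simp
  have int: "set_integrable lborel {\<epsilon><..} ?f" by (rule muS_conv(1)[OF eps(1) s g M])
  have "(LBINT t=ereal \<epsilon>..ereal \<eta>. ?f t) + (LBINT t=ereal \<eta>..\<infinity>. ?f t) = (LBINT t=ereal \<epsilon>..\<infinity>. ?f t)"
  proof (rule interval_integral_sum)
    have "min (ereal \<epsilon>) (min (ereal \<eta>) \<infinity>) = ereal \<epsilon>" "max (ereal \<epsilon>) (max (ereal \<eta>) \<infinity>) = \<infinity>"
      using eps by auto
    then show "interval_lebesgue_integrable lborel (min (ereal \<epsilon>) (min (ereal \<eta>) \<infinity>)) (max (ereal \<epsilon>) (max (ereal \<eta>) \<infinity>)) ?f"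
      using int by (simp add: interval_lebesgue_integrable_def)
  qed
  then have split: "(LINT t:{\<epsilon><..<\<eta>}|lborel. ?f t) + (LINT t:{\<eta><..}|lborel. ?f t) = (LINT t:{\<epsilon><..}|lborel. ?f t)"
    using eps by (simp add: interval_lebesgue_integral_def)
  have w0: "0 \<le> Cs s * t powr (-1-2 * s)" for t using Cs by simp
  have n: "(LINT t:{\<epsilon><..<\<eta>}|lborel. ?f t) \<le> (LINT t:{\<epsilon><..<\<eta>}|lborel. Cs s * t powr (-1-2 * s) * (a*t + b*t^2))"
  proof (rule set_integral_mono)
    show "set_integrable lborel {\<epsilon><..<\<eta>} ?f" by (rule set_integrable_subset[OF int]) auto
    show "set_integrable lborel {\<epsilon><..<\<eta>} (\<lambda>t. Cs s * t powr (-1-2 * s) * (a*t + b*t^2))"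
      by (rule near_int(1)[OF eps s])
    fix t assume "t \<in> {\<epsilon><..<\<eta>}"
    then show "?f t \<le> Cs s * t powr (-1-2 * s) * (a*t + b*t^2)"
      using near[of t] w0[of t] by (intro mult_left_mono) auto
  qed
  have f: "(LINT t:{\<eta><..}|lborel. ?f t) \<le> (LINT t:{\<eta><..}|lborel. Cs s * t powr (-1-2 * s) * (c * (1 + t)))"
  proof (rule set_integral_mono)
    show "set_integrable lborel {\<eta><..} ?f" by (rule set_integrable_subset[OF int]) (use eps in auto)
    show "set_integrable lborel {\<eta><..} (\<lambda>t. Cs s * t powr (-1-2 * s) * (c * (1 + t)))"
      by (rule far_int(1)[OF eta s c]) (use Cs in simp)
    fix t assume "t \<in> {\<eta><..}"
    then show "?f t \<le> Cs s * t powr (-1-2 * s) * (c * (1 + t))"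
      using far[of t] w0[of t] by (intro mult_left_mono) auto
  qed
  show ?thesis
    using split n f near_int(2)[OF eps s, of a b] far_int(2)[OF eta s c] Cs by simp
qed

lemma rhs1: "s \<noteq> 0 \<Longrightarrow> 1 - s \<noteq> (0::real) \<Longrightarrow> 4 * (C / (s * (1 - s))) * s * ((1/2) * B2) * X * A = 4 * B2 * A * (C * X / (2 - 2 * s))"
proof -
  assume a: "s \<noteq> 0" "1 - s \<noteq> (0::real)"
  have "2 - 2 * s = 2 * (1 - s)" by simp
  then show ?thesis using a by (simp add: field_simps)
qed
lemma rhs2: "s \<noteq> 0 \<Longrightarrow> 1 - s \<noteq> (0::real) \<Longrightarrow> 2 * s - 1 \<noteq> 0 \<Longrightarrow> (C / (s * (1 - s))) * (1 - s) * (E1 + 2 * s / (2 * s - 1) * E2) * oA = 2 * (C * (E1 / (2 * s) + E2 / (2 * s - 1))) * oA"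
proof -
  assume a: "s \<noteq> 0" "1 - s \<noteq> (0::real)" "2 * s - 1 \<noteq> 0"
  have 1: "(C / (s * (1 - s))) * (1 - s) = C / s" using a by simp
  have 2: "C / s * (2 * s / (2 * s - 1)) = 2 * C / (2 * s - 1)" using a by simp
  have 3: "C / s * E1 = 2 * (C * (E1 / (2 * s)))" using a by simp
  have "(C / (s * (1 - s))) * (1 - s) * (E1 + 2 * s / (2 * s - 1) * E2) = C / s * E1 + (C / s * (2 * s / (2 * s - 1))) * E2"
    unfolding 1 by (simp add: algebra_simps)
  also have "\<dots> = 2 * (C * (E1 / (2 * s) + E2 / (2 * s - 1)))"
    unfolding 2 3 by (simp add: algebra_simps)
  finally show ?thesis by simp
qed

lemma h2alg: "p \<noteq> 0 \<Longrightarrow> Y \<noteq> 0 \<Longrightarrow> k \<noteq> 0 \<Longrightarrow> m \<noteq> (0::real) \<Longrightarrow> p * (16 * ((1/2) * B2) / p * k / m * X / Y) * (C * Y / k) = 16 * B2 * (C * X / (2 * m))"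
  by (simp add: field_simps)
lemma h2alg': "p \<noteq> 0 \<Longrightarrow> Y \<noteq> 0 \<Longrightarrow> 2 * s - 1 \<noteq> 0 \<Longrightarrow> 1 - s \<noteq> (0::real) \<Longrightarrow> p * (16 * ((1/2) * B2) / p * (2 * s - 1) / (1 - s) * X / Y) * (C * Y / (2 * s - 1)) = 16 * B2 * (C * X / (2 - 2 * s))"
  using h2alg[of p Y "2 * s - 1" "1 - s" B2 X C] by simp
lemma h3alg: "p \<noteq> 0 \<Longrightarrow> Y \<noteq> 0 \<Longrightarrow> k \<noteq> 0 \<Longrightarrow> (t::real) \<noteq> 0 \<Longrightarrow> p * (8 * ow / p * ((k / t * E1 + E2) / Y)) * (C * Y / k) = 8 * ow * (C * (E1 / t + E2 / k))"
  by (simp add: field_simps)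
lemma h3alg': "p \<noteq> 0 \<Longrightarrow> Y \<noteq> 0 \<Longrightarrow> 2 * s - 1 \<noteq> 0 \<Longrightarrow> s \<noteq> (0::real) \<Longrightarrow> p * (8 * ow / p * (((2 * s - 1) / (2 * s) * E1 + E2) / Y)) * (C * Y / (2 * s - 1)) = 8 * ow * (C * (E1 / (2 * s) + E2 / (2 * s - 1)))"
  using h3alg[of p Y "2 * s - 1" "2 * s" ow E1 E2 C] by simp

lemma core:
  fixes \<phi> :: "'a::euclidean_space \<Rightarrow> real"
    and x :: 'a and \<eta> s \<epsilon> :: real
    and D :: "'a \<Rightarrow> 'a" and H :: "'a \<Rightarrow> ('a \<Rightarrow>\<^sub>L 'a)"
  assumes s: "1/2 < s" "s < 1"
    and eta: "\<eta> > 0"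
    and bnd: "bounded (range \<phi>)"
    and borel[measurable]: "\<phi> \<in> borel_measurable borel"
    and grad: "\<And>z. z \<in> cball x \<eta> \<Longrightarrow> (\<phi> has_derivative (\<lambda>h. D z \<bullet> h)) (at z within cball x \<eta>)"
    and hess: "\<And>z. z \<in> cball x \<eta> \<Longrightarrow> (D has_derivative blinfun_apply (H z)) (at z within cball x \<eta>)"
    and hess_cont: "continuous_on (cball x \<eta>) H"
    and outside_bnd: "bounded (\<phi> ` (- cball x \<eta>))"
    and px: "D x \<noteq> 0"
    and eps: "0 < \<epsilon>" "\<epsilon> < \<eta>"
    and N2: "2 \<le> DIM('a)" and sig: "\<sigma> = 1 \<or> \<sigma> = -1" and y: "norm y = 1"
  shows "(LINT t:{\<epsilon><..}|lborel. Cs s * t powr (-1-2 * s) * (\<sigma> * (\<phi> (x + (\<sigma> * t) *\<^sub>R y) - \<phi> (x + (\<sigma> * t) *\<^sub>R (D x /\<^sub>R norm (D x))))))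
         \<le> 4 * cs s * s * ((1/2) * (SUP z\<in>ball x \<eta>. norm (H z))) * (\<eta> powr (2 - 2 * s) - \<epsilon> powr (2 - 2 * s))
              * Aeps s \<phi> x \<eta> (norm (D x)) ((1/2) * (SUP z\<in>ball x \<eta>. norm (H z))) \<epsilon>
           + cs s * (1 - s) * (\<eta> powr (-2 * s) + 2 * s / (2 * s - 1) * \<eta> powr (1 - 2 * s))
              * omega \<phi> x \<eta> (Aeps s \<phi> x \<eta> (norm (D x)) ((1/2) * (SUP z\<in>ball x \<eta>. norm (H z))) \<epsilon>)"
proof -
  define p where "p = norm (D x)"
  define e where "e = D x /\<^sub>R norm (D x)"
  define B2 where "B2 = (SUP z\<in>ball x \<eta>. norm (H z))"
  define d where "d = norm (y - e)"
  define om where "om = omega \<phi> x \<eta>"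
  define A where "A = Aeps s \<phi> x \<eta> p ((1/2) * B2) \<epsilon>"
  define Y where "Y = \<epsilon> powr (1-2 * s) - \<eta> powr (1-2 * s)"
  define X where "X = \<eta> powr (2-2 * s) - \<epsilon> powr (2-2 * s)"
  define Z where "Z = \<eta> powr (-2 * s) / (2 * s) + \<eta> powr (1-2 * s) / (2 * s-1)"
  define K1 where "K1 = Cs s * Y / (2 * s - 1)"
  define K2 where "K2 = Cs s * X / (2 - 2 * s)"
  define Kf where "Kf = Cs s * Z"
  have Cs: "0 < Cs s" using s by (intro Cs_pos) auto
  have p: "0 < p" using px by (simp add: p_def)
  have ne: "norm e = 1" using px by (simp add: e_def)
  have B2: "0 \<le> B2" using hbound[OF hess_cont eta, of x] eta unfolding B2_def
    by (meson norm_ge_zero order_trans centre_in_cball less_imp_le)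
  have d0: "0 \<le> d" by (simp add: d_def)
  have d2: "d \<le> 2" using norm_triangle_ineq4[of y e] y ne by (simp add: d_def)
  have Y: "0 < Y" unfolding Y_def using eps s by (simp add: powr_less_mono2_neg)
  have X: "0 \<le> X" unfolding X_def using eps s by (simp add: powr_mono2)
  have K1: "0 < K1" using Cs Y s by (simp add: K1_def)
  have K2: "0 \<le> K2" using Cs X s by (simp add: K2_def)
  have Kf: "0 \<le> Kf" using Cs s by (simp add: Kf_def Z_def)
  obtain M where M: "\<And>z. \<bar>\<phi> z\<bar> \<le> M" using bnd unfolding bounded_iff by (metis rangeI real_norm_def)
  let ?g = "\<lambda>t. \<sigma> * (\<phi> (x + (\<sigma> * t) *\<^sub>R y) - \<phi> (x + (\<sigma> * t) *\<^sub>R e))"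
  have gm: "?g \<in> borel_measurable borel" by measurable
  have s1: "\<bar>\<sigma>\<bar> = 1" using sigma_facts[OF sig] by auto
  have gM: "\<bar>?g t\<bar> \<le> 2 * M" for t
  proof -
    have "\<bar>?g t\<bar> = \<bar>\<phi> (x + (\<sigma> * t) *\<^sub>R y) - \<phi> (x + (\<sigma> * t) *\<^sub>R e)\<bar>" using s1 by (simp add: abs_mult)
    also have "\<dots> \<le> 2 * M" using M[of "x + (\<sigma> * t) *\<^sub>R y"] M[of "x + (\<sigma> * t) *\<^sub>R e"] by linarith
    finally show ?thesis .
  qed
  have om0: "0 \<le> om d" unfolding om_def by (rule omega_nonneg[OF outside_bnd d0])
  have est: "(LINT t:{\<epsilon><..}|lborel. Cs s * t powr (-1-2 * s) * ?g t)
    \<le> Cs s * ((- p * d^2 / 2)*Y/(2 * s-1) + (B2 * d)*X/(2-2 * s)) + Cs s * (2 * om d) * Z"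
    unfolding Y_def X_def Z_def
  proof (rule split_est[OF eps s gm gM])
    fix t assume t: "\<epsilon> < t" "t < \<eta>"
    show "?g t \<le> (- p * d^2 / 2) * t + (B2 * d) * t^2"
      using near_pt[OF eta grad hess hess_cont px sig y, of t] t eps
      by (simp add: p_def e_def d_def B2_def)
  next
    fix t assume t: "\<eta> < t"
    show "?g t \<le> (2 * om d) * (1 + t)"
      using far_pt[OF N2 outside_bnd eta sig y ne t] by (simp add: om_def d_def)
  qed (use om0 in simp)
  have V: "Cs s * ((- p * d^2 / 2)*Y/(2 * s-1) + (B2 * d)*X/(2-2 * s)) + Cs s * (2 * om d) * Z
      = (- p * d^2 / 2) * K1 + (B2 * d) * K2 + (2 * om d) * Kf"
    by (simp add: K1_def K2_def Kf_def algebra_simps)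
  have sne: "s \<noteq> 0" "1 - s \<noteq> 0" "2 * s - 1 \<noteq> 0" "2 - 2 * s \<noteq> 0" using s by auto
  have RHS: "4 * cs s * s * ((1/2) * B2) * X * A + cs s * (1 - s) * (\<eta> powr (-2 * s) + 2 * s / (2 * s - 1) * \<eta> powr (1 - 2 * s)) * om A
      = 4 * B2 * A * K2 + 2 * Kf * om A"
    unfolding cs_def K2_def Kf_def Z_def
    by (simp only: rhs1[OF sne(1,2), of "Cs s" B2 X A] rhs2[OF sne(1,2,3), of "Cs s" "\<eta> powr (-2 * s)" "\<eta> powr (1 - 2 * s)" "om A"])
  have T1A: "16 * ((1/2) * B2) / p * (2 * s - 1) / (1 - s) * X / Y \<le> A"
    unfolding A_def Aeps_def X_def Y_def by simp
  have kA: "kappa s \<phi> x \<eta> p \<epsilon> \<le> A"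
    unfolding A_def Aeps_def by simp
  have A0: "0 \<le> A"
  proof -
    have "0 \<le> 16 * ((1/2) * B2) / p * (2 * s - 1) / (1 - s) * X / Y"
      using B2 p s X Y by simp
    then show ?thesis using T1A by linarith
  qed
  have oA0: "0 \<le> om A" unfolding om_def by (rule omega_nonneg[OF outside_bnd A0])
  have fin: "(- p * d^2 / 2) * K1 + (B2 * d) * K2 + (2 * om d) * Kf \<le> 4 * B2 * A * K2 + 2 * Kf * om A"
  proof (rule final_alg[OF p B2 K1 K2 Kf d0 A0 om0 oA0])
    assume "d \<le> A" then show "om d \<le> om A" unfolding om_def by (rule omega_mono[OF outside_bnd d0])
  next
    assume Ad: "A < d"
    have "p * (16 * ((1/2) * B2) / p * (2 * s - 1) / (1 - s) * X / Y) * K1 = 16 * B2 * K2"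
      unfolding K1_def K2_def using h2alg'[of p Y s B2 X "Cs s"] sne p Y by simp
    moreover have "p * (16 * ((1/2) * B2) / p * (2 * s - 1) / (1 - s) * X / Y) * K1 < p * d * K1"
      using T1A Ad p K1 by (intro mult_strict_right_mono mult_strict_left_mono) auto
    ultimately show "16 * B2 * K2 < p * d * K1" by simp
  next
    assume Ad: "A < d"
    define Qn where "Qn = (2 * s - 1) / (2 * s) * \<eta> powr (-2 * s) + \<eta> powr (1 - 2 * s)"
    define KS where "KS = {a \<in> {0..2}. a\<^sup>2 \<le> 8 * omega \<phi> x \<eta> a / p * (Qn / Y)}"
    have kap: "kappa s \<phi> x \<eta> p \<epsilon> = Sup KS"
      unfolding kappa_def KS_def Qn_def Y_def by simp
    have "d \<notin> KS"
    proof
      assume "d \<in> KS"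
      moreover have "bdd_above KS" unfolding KS_def by (rule bdd_aboveI[where M = 2]) auto
      ultimately have "d \<le> Sup KS" by (rule cSup_upper)
      then show False using kap kA Ad by linarith
    qed
    then have lt: "8 * om d / p * (Qn / Y) < d^2" using d0 d2 unfolding KS_def om_def by auto
    have "p * (8 * om d / p * (Qn / Y)) * K1 = 8 * om d * Kf"
      unfolding K1_def Kf_def Z_def Qn_def
      using h3alg'[of p Y s "om d" "\<eta> powr (-2 * s)" "\<eta> powr (1 - 2 * s)" "Cs s"] sne p Y by simp
    moreover have "p * (8 * om d / p * (Qn / Y)) * K1 < p * d^2 * K1"
      using lt p K1 by (intro mult_strict_right_mono mult_strict_left_mono) auto
    ultimately show "8 * om d * Kf < p * d^2 * K1" by simp
  qed
  have "(LINT t:{\<epsilon><..}|lborel. Cs s * t powr (-1-2 * s) * ?g t) \<le> 4 * B2 * A * K2 + 2 * Kf * om A"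
    using est V fin by simp
  then show ?thesis
    using RHS by (simp add: p_def e_def B2_def A_def om_def X_def)
qed
lemma rhs_nonneg:
  fixes \<phi> :: "'a::euclidean_space \<Rightarrow> real" and H :: "'a \<Rightarrow> ('a \<Rightarrow>\<^sub>L 'a)"
  assumes s: "1/2 < s" "s < 1" and eta: "\<eta> > 0"
    and hess_cont: "continuous_on (cball x \<eta>) H"
    and outside_bnd: "bounded (\<phi> ` (- cball x \<eta>))"
    and p: "0 < p" and eps: "0 < \<epsilon>" "\<epsilon> < \<eta>"
  shows "0 \<le> 4 * cs s * s * ((1/2) * (SUP z\<in>ball x \<eta>. norm (H z))) * (\<eta> powr (2 - 2 * s) - \<epsilon> powr (2 - 2 * s))
              * Aeps s \<phi> x \<eta> p ((1/2) * (SUP z\<in>ball x \<eta>. norm (H z))) \<epsilon>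
           + cs s * (1 - s) * (\<eta> powr (-2 * s) + 2 * s / (2 * s - 1) * \<eta> powr (1 - 2 * s))
              * omega \<phi> x \<eta> (Aeps s \<phi> x \<eta> p ((1/2) * (SUP z\<in>ball x \<eta>. norm (H z))) \<epsilon>)"
proof -
  define B2 where "B2 = (SUP z\<in>ball x \<eta>. norm (H z))"
  define A where "A = Aeps s \<phi> x \<eta> p ((1/2) * B2) \<epsilon>"
  define Y where "Y = \<epsilon> powr (1-2 * s) - \<eta> powr (1-2 * s)"
  define X where "X = \<eta> powr (2-2 * s) - \<epsilon> powr (2-2 * s)"
  have Cs: "0 < Cs s" using s by (intro Cs_pos) auto
  have B2: "0 \<le> B2" using hbound[OF hess_cont eta, of x] eta unfolding B2_def
    by (meson norm_ge_zero order_trans centre_in_cball less_imp_le)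
  have Y: "0 < Y" unfolding Y_def using eps s by (simp add: powr_less_mono2_neg)
  have X: "0 \<le> X" unfolding X_def using eps s by (simp add: powr_mono2)
  have T1A: "16 * ((1/2) * B2) / p * (2 * s - 1) / (1 - s) * X / Y \<le> A"
    unfolding A_def Aeps_def X_def Y_def by simp
  have A0: "0 \<le> A"
  proof -
    have "0 \<le> 16 * ((1/2) * B2) / p * (2 * s - 1) / (1 - s) * X / Y"
      using B2 p s X Y by simp
    then show ?thesis using T1A by linarith
  qed
  have oA0: "0 \<le> omega \<phi> x \<eta> A" by (rule omega_nonneg[OF outside_bnd A0])
  have cs: "0 \<le> cs s" using Cs s by (simp add: cs_def)
  have t1: "0 \<le> 4 * cs s * s * ((1/2) * B2) * X * A" using cs s B2 X A0 by simp
  have t2: "0 \<le> cs s * (1 - s) * (\<eta> powr (-2 * s) + 2 * s / (2 * s - 1) * \<eta> powr (1 - 2 * s)) * omega \<phi> x \<eta> A"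
    using cs s oA0 by simp
  show ?thesis using t1 t2 unfolding B2_def A_def X_def by simp
qed

lemma int_abs_bnd:
  fixes g :: "real \<Rightarrow> real"
  assumes eps: "0 < \<epsilon>" and s: "1/2 < s" "s < 1"
    and g[measurable]: "g \<in> borel_measurable borel" and M: "\<And>t. \<bar>g t\<bar> \<le> M"
  shows "\<bar>LINT t:{\<epsilon><..}|lborel. Cs s * t powr (-1-2 * s) * g t\<bar>
     \<le> M * (LINT t:{\<epsilon><..}|lborel. Cs s * t powr (-1-2 * s) * (1 * (1 + t)))"
proof -
  let ?f = "\<lambda>t. Cs s * t powr (-1-2 * s) * g t"
  let ?h = "\<lambda>t. Cs s * t powr (-1-2 * s) * (1 * (1 + t))"
  have Cs: "0 < Cs s" using s by (intro Cs_pos) auto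
  have intf: "set_integrable lborel {\<epsilon><..} ?f" by (rule muS_conv(1)[OF eps s g M])
  have inth: "set_integrable lborel {\<epsilon><..} ?h" by (rule far_int(1)[OF eps s]) (use Cs in auto)
  have inthM: "set_integrable lborel {\<epsilon><..} (\<lambda>t. M * ?h t)" using inth by simp
  have inthM': "set_integrable lborel {\<epsilon><..} (\<lambda>t. - (M * ?h t))"
    using inthM unfolding set_integrable_def by simp
  have pt: "\<bar>?f t\<bar> \<le> M * ?h t" if "t \<in> {\<epsilon><..}" for t
  proof -
    have tp: "0 < t" using that eps by simp
    have w0: "0 \<le> Cs s * t powr (-1-2 * s)" using Cs by simp
    have M0: "0 \<le> M" using M[of 0] by simp
    have "\<bar>?f t\<bar> = Cs s * t powr (-1-2 * s) * \<bar>g t\<bar>" using w0 Cs by (simp add: abs_mult)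
    also have "\<dots> \<le> Cs s * t powr (-1-2 * s) * (M * (1 + t))"
    proof (rule mult_left_mono[OF _ w0])
      have "M \<le> M * (1 + t)" using M0 tp by (simp add: algebra_simps)
      then show "\<bar>g t\<bar> \<le> M * (1 + t)" using M[of t] by linarith
    qed
    also have "\<dots> = M * ?h t" by (simp add: algebra_simps)
    finally show ?thesis .
  qed
  have up: "(LINT t:{\<epsilon><..}|lborel. ?f t) \<le> (LINT t:{\<epsilon><..}|lborel. M * ?h t)"
    by (rule set_integral_mono[OF intf inthM]) (use pt in fastforce)
  have lo: "(LINT t:{\<epsilon><..}|lborel. - (M * ?h t)) \<le> (LINT t:{\<epsilon><..}|lborel. ?f t)"
    by (rule set_integral_mono[OF inthM' intf]) (use pt in fastforce)
  have "(LINT t:{\<epsilon><..}|lborel. - (M * ?h t)) = - (LINT t:{\<epsilon><..}|lborel. M * ?h t)"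
    by (rule set_integral_uminus[OF inthM])
  then show ?thesis using up lo by simp
qed

lemma dim1_unit:
  fixes y e :: "'a::euclidean_space"
  assumes "DIM('a) = 1" "norm y = 1" "norm e = 1"
  shows "y = e \<or> y = - e"
proof -
  obtain b where b: "Basis = {b::'a}" using assms(1) card_1_singletonE by blast
  have nb: "norm b = 1" using b by (metis insertI1 norm_Basis)
  have ry: "y = (y \<bullet> b) *\<^sub>R b" using euclidean_representation[of y] unfolding b by simp
  have re: "e = (e \<bullet> b) *\<^sub>R b" using euclidean_representation[of e] unfolding b by simp
  have "\<bar>y \<bullet> b\<bar> = 1" using assms(2) nb by (subst (asm) ry) simp
  moreover have "\<bar>e \<bullet> b\<bar> = 1" using assms(3) nb by (subst (asm) re) simp
  ultimately have "y \<bullet> b = e \<bullet> b \<or> y \<bullet> b = - (e \<bullet> b)" by linarith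
  then show ?thesis
  proof
    assume "y \<bullet> b = e \<bullet> b" then show ?thesis using ry re by metis
  next
    assume "y \<bullet> b = - (e \<bullet> b)" then have "y = - e" using ry re by (metis scaleR_minus_left)
    then show ?thesis by simp
  qed
qed

theorem proposition3p1:
  fixes \<phi> :: "'a::euclidean_space \<Rightarrow> real"
    and x :: 'a and \<eta> s \<epsilon> :: real
    and D :: "'a \<Rightarrow> 'a" and H :: "'a \<Rightarrow> ('a \<Rightarrow>\<^sub>L 'a)"
  assumes s: "1/2 < s" "s < 1"
    and eta: "\<eta> > 0"
    and bnd: "bounded (range \<phi>)"
    and borel: "\<phi> \<in> borel_measurable borel"
    and grad: "\<And>z. z \<in> cball x \<eta> \<Longrightarrow> (\<phi> has_derivative (\<lambda>h. D z \<bullet> h)) (at z within cball x \<eta>)"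
    and hess: "\<And>z. z \<in> cball x \<eta> \<Longrightarrow> (D has_derivative blinfun_apply (H z)) (at z within cball x \<eta>)"
    and hess_cont: "continuous_on (cball x \<eta>) H"
    and outside_bnd: "bounded (\<phi> ` (- cball x \<eta>))"
    and outside_uc: "uniformly_continuous_on (- cball x \<eta>) \<phi>"
    and px: "D x \<noteq> 0"
    and eps: "0 < \<epsilon>" "\<epsilon> < \<eta>"
  shows "\<bar>Leps s \<epsilon> \<phi> x
           - (LINT t:{\<epsilon><..}|muS s. Lphi \<phi> x (t *\<^sub>R (D x /\<^sub>R norm (D x))) (t *\<^sub>R (D x /\<^sub>R norm (D x))))\<bar>
         \<le> 4 * cs s * s * ((1/2) * (SUP z\<in>ball x \<eta>. norm (H z))) * (\<eta> powr (2 - 2 * s) - \<epsilon> powr (2 - 2 * s))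
              * Aeps s \<phi> x \<eta> (norm (D x)) ((1/2) * (SUP z\<in>ball x \<eta>. norm (H z))) \<epsilon>
           + cs s * (1 - s) * (\<eta> powr (-2 * s) + 2 * s / (2 * s - 1) * \<eta> powr (1 - 2 * s))
              * omega \<phi> x \<eta> (Aeps s \<phi> x \<eta> (norm (D x)) ((1/2) * (SUP z\<in>ball x \<eta>. norm (H z))) \<epsilon>)"
    (is "\<bar>_ - _\<bar> \<le> ?R")
proof -
  note borel[measurable]
  define e where "e = D x /\<^sub>R norm (D x)"
  define G where "G y y' = (LINT t:{\<epsilon><..}|muS s. Lphi \<phi> x (t *\<^sub>R y) (t *\<^sub>R y'))" for y y'
  define W where "W f = (LINT t:{\<epsilon><..}|lborel. Cs s * t powr (-1-2 * s) * f t)" for f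
  have ne: "norm e = 1" using px by (simp add: e_def)
  have eS: "e \<in> sphere 0 1" "- e \<in> sphere 0 1" using ne by auto
  have SNE: "sphere (0::'a) 1 \<noteq> {}" using eS by auto
  obtain M where M: "\<And>z. \<bar>\<phi> z\<bar> \<le> M" using bnd unfolding bounded_iff by (metis rangeI real_norm_def)
  have Lm: "(\<lambda>t. Lphi \<phi> x (t *\<^sub>R y) (t *\<^sub>R y')) \<in> borel_measurable borel" for y y'
    unfolding Lphi_def by measurable
  have LM: "\<bar>Lphi \<phi> x (t *\<^sub>R y) (t *\<^sub>R y')\<bar> \<le> 4 * M" for t y y'
    unfolding Lphi_def using M[of "x + t *\<^sub>R y"] M[of "x - t *\<^sub>R y'"] M[of x] by linarith
  have Gl: "G y y' = W (\<lambda>t. Lphi \<phi> x (t *\<^sub>R y) (t *\<^sub>R y'))" for y y'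
    unfolding G_def W_def by (rule muS_conv(2)[OF eps(1) s Lm LM])
  have Gi: "set_integrable lborel {\<epsilon><..} (\<lambda>t. Cs s * t powr (-1-2 * s) * Lphi \<phi> x (t *\<^sub>R y) (t *\<^sub>R y'))" for y y'
    by (rule muS_conv(1)[OF eps(1) s Lm LM])
  define BB where "BB = 4 * M * (LINT t:{\<epsilon><..}|lborel. Cs s * t powr (-1-2 * s) * (1 * (1 + t)))"
  have Gb: "\<bar>G y y'\<bar> \<le> BB" for y y'
    unfolding Gl W_def BB_def by (rule int_abs_bnd[OF eps(1) s Lm LM])
  have Gd: "G y y' - G z z' = W (\<lambda>t. Lphi \<phi> x (t *\<^sub>R y) (t *\<^sub>R y') - Lphi \<phi> x (t *\<^sub>R z) (t *\<^sub>R z'))" for y y' z z'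
    unfolding Gl W_def using set_integral_diff(2)[OF Gi Gi, of y y' z z'] by (simp add: right_diff_distrib)
  have Wcong: "W f = W g" if "\<And>t. f t = g t" for f g
    unfolding W_def using that by simp
  have LepsG: "Leps s \<epsilon> \<phi> x = (SUP y\<in>sphere 0 1. INF y'\<in>sphere 0 1. G y y')"
    by (simp add: Leps_def G_def)
  have IG: "(LINT t:{\<epsilon><..}|muS s. Lphi \<phi> x (t *\<^sub>R (D x /\<^sub>R norm (D x))) (t *\<^sub>R (D x /\<^sub>R norm (D x)))) = G e e"
    by (simp add: G_def e_def)
  have bb: "bdd_below (G y ` sphere 0 1)" for y
  proof (rule bdd_belowI[where m = "- BB"])
    fix r assume "r \<in> G y ` sphere 0 1"
    then obtain y' where "r = G y y'" by auto
    then show "- BB \<le> r" using Gb[of y y'] by linarith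
  qed
  have INF_le: "(INF y'\<in>sphere 0 1. G y y') \<le> G y y'" if "y' \<in> sphere 0 1" for y y'
    by (rule cINF_lower[OF bb that])
  have ba: "bdd_above ((\<lambda>y. INF y'\<in>sphere 0 1. G y y') ` sphere 0 1)"
  proof (rule bdd_aboveI[where M = BB])
    fix r assume "r \<in> (\<lambda>y. INF y'\<in>sphere 0 1. G y y') ` sphere 0 1"
    then obtain y where r: "r = (INF y'\<in>sphere 0 1. G y y')" by auto
    have "r \<le> G y e" unfolding r by (rule INF_le[OF eS(1)])
    also have "\<dots> \<le> BB" using Gb[of y e] by simp
    finally show "r \<le> BB" .
  qed
  have SUP_ge: "(INF y'\<in>sphere 0 1. G y y') \<le> Leps s \<epsilon> \<phi> x" if "y \<in> sphere 0 1" for y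
    unfolding LepsG by (rule cSUP_upper[OF that ba])
  have R0: "0 \<le> ?R"
    by (rule rhs_nonneg[OF s eta hess_cont outside_bnd _ eps]) (use px in simp)
  have up: "Leps s \<epsilon> \<phi> x \<le> G e e + ?R" and lo: "G e e - ?R \<le> Leps s \<epsilon> \<phi> x"
  proof -
    have "Leps s \<epsilon> \<phi> x \<le> G e e + ?R \<and> G e e - ?R \<le> Leps s \<epsilon> \<phi> x"
    proof (cases "DIM('a) = 1")
      case False
      then have N2: "2 \<le> DIM('a)" using DIM_positive[where 'a='a] by linarith
      have c1: "G y e - G e e \<le> ?R" if y: "norm y = 1" for y
      proof -
        have "G y e - G e e = W (\<lambda>t. 1 * (\<phi> (x + (1 * t) *\<^sub>R y) - \<phi> (x + (1 * t) *\<^sub>R (D x /\<^sub>R norm (D x)))))"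
          unfolding Gd by (rule Wcong) (simp add: Lphi_def e_def)
        also have "\<dots> \<le> ?R" unfolding W_def
          using core[OF s eta bnd borel grad hess hess_cont outside_bnd px eps N2 _ y, of 1] by simp
        finally show ?thesis .
      qed
      have c2: "G e e - G e y' \<le> ?R" if y': "norm y' = 1" for y'
      proof -
        have i1: "set_integrable lborel {\<epsilon><..} (\<lambda>t. Cs s * t powr (-1-2 * s) * (Lphi \<phi> x (t *\<^sub>R e) (t *\<^sub>R e) - Lphi \<phi> x (t *\<^sub>R e) (t *\<^sub>R y')))"
          using set_integral_diff(1)[OF Gi Gi, of e e e y'] by (simp add: right_diff_distrib)
        have "G e e - G e y' = W (\<lambda>t. Lphi \<phi> x (t *\<^sub>R e) (t *\<^sub>R e) - Lphi \<phi> x (t *\<^sub>R e) (t *\<^sub>R y'))"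
          by (rule Gd)
        also have "\<dots> = W (\<lambda>t. (-1) * (\<phi> (x + (-1 * t) *\<^sub>R y') - \<phi> (x + (-1 * t) *\<^sub>R (D x /\<^sub>R norm (D x)))))"
          by (rule Wcong) (simp add: Lphi_def e_def)
        also have "\<dots> \<le> ?R" unfolding W_def
          using core[OF s eta bnd borel grad hess hess_cont outside_bnd px eps N2 _ y', of "-1"] by simp
        finally show ?thesis .
      qed
      have "Leps s \<epsilon> \<phi> x \<le> G e e + ?R"
        unfolding LepsG
      proof (rule cSUP_least[OF SNE])
        fix y :: 'a assume y: "y \<in> sphere 0 1"
        have "(INF y'\<in>sphere 0 1. G y y') \<le> G y e" by (rule INF_le[OF eS(1)])
        also have "\<dots> \<le> G e e + ?R" using c1[of y] y by simp
        finally show "(INF y'\<in>sphere 0 1. G y y') \<le> G e e + ?R" .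
      qed
      moreover have "G e e - ?R \<le> Leps s \<epsilon> \<phi> x"
      proof -
        have "G e e - ?R \<le> (INF y'\<in>sphere 0 1. G e y')"
        proof (rule cINF_greatest[OF SNE])
          fix y' :: 'a assume "y' \<in> sphere 0 1"
          then show "G e e - ?R \<le> G e y'" using c2[of y'] by simp
        qed
        also have "\<dots> \<le> Leps s \<epsilon> \<phi> x" by (rule SUP_ge[OF eS(1)])
        finally show ?thesis .
      qed
      ultimately show ?thesis by simp
    next
      case True
      have two: "y = e \<or> y = - e" if "y \<in> sphere 0 1" for y
        using dim1_unit[OF True _ ne, of y] that by simp
      have Gmm: "G (- e) (- e) = G e e"
        unfolding G_def Lphi_def by (simp add: algebra_simps)
      have Gsum: "G e (- e) + G (- e) e = 2 * G e e"
      proof -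
        have "G e (- e) + G (- e) e = W (\<lambda>t. Lphi \<phi> x (t *\<^sub>R e) (t *\<^sub>R - e) + Lphi \<phi> x (t *\<^sub>R - e) (t *\<^sub>R e))"
          unfolding Gl W_def using set_integral_add(2)[OF Gi Gi, of e "- e" "- e" e] by (simp add: distrib_left)
        also have "\<dots> = W (\<lambda>t. 2 * Lphi \<phi> x (t *\<^sub>R e) (t *\<^sub>R e))"
          by (rule Wcong) (simp add: Lphi_def algebra_simps)
        also have "\<dots> = 2 * G e e"
          unfolding Gl W_def by (simp add: mult.left_commute[of _ 2])
        finally show ?thesis .
      qed
      have "Leps s \<epsilon> \<phi> x \<le> G e e"
        unfolding LepsG
      proof (rule cSUP_least[OF SNE])
        fix y :: 'a assume y: "y \<in> sphere 0 1"
        have "(INF y'\<in>sphere 0 1. G y y') \<le> G y y" by (rule INF_le[OF y])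
        also have "\<dots> = G e e" using two[OF y] Gmm by auto
        finally show "(INF y'\<in>sphere 0 1. G y y') \<le> G e e" .
      qed
      moreover have "G e e \<le> Leps s \<epsilon> \<phi> x"
      proof (cases "G e e \<le> G (- e) e")
        case True
        have "G e e \<le> (INF y'\<in>sphere 0 1. G (- e) y')"
        proof (rule cINF_greatest[OF SNE])
          fix y' :: 'a assume "y' \<in> sphere 0 1"
          then show "G e e \<le> G (- e) y'" using two[of y'] True Gmm by auto
        qed
        also have "\<dots> \<le> Leps s \<epsilon> \<phi> x" by (rule SUP_ge[OF eS(2)])
        finally show ?thesis .
      next
        case False
        have "G e e \<le> (INF y'\<in>sphere 0 1. G e y')"
        proof (rule cINF_greatest[OF SNE])
          fix y' :: 'a assume "y' \<in> sphere 0 1"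
          then show "G e e \<le> G e y'" using two[of y'] False Gsum by auto
        qed
        also have "\<dots> \<le> Leps s \<epsilon> \<phi> x" by (rule SUP_ge[OF eS(1)])
        finally show ?thesis .
      qed
      ultimately show ?thesis using R0 by simp
    qed
    then show "Leps s \<epsilon> \<phi> x \<le> G e e + ?R" "G e e - ?R \<le> Leps s \<epsilon> \<phi> x" by auto
  qed
  show ?thesis unfolding IG using up lo by (simp add: abs_le_iff)
qed

end
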